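(* Let $A\in M_n(R)$ be a definite matrix. Then $A^{\nabla}\cong_\nu A^*\cong_\nu A^{n-1}$, where $A^*=\sum_{i\geq 0}A^i$ is the Kleene star of $A$.
   Context: Supertropical semiring $R=T\cup G\cup\{-\infty\}$: $T=\mathcal G$ an ordered abelian group (tangible), $G=\{a^\nu\}$ a copy (ghost); $a+b$ is the element of larger $\nu$-value if the $\nu$-values differ and $a^\nu$ if equal; multiplication adds $\nu$-values, is ghost if a factor is ghost, $-\infty$ absorbing; $0_R=-\infty$, $1_R=0$. Matrix operations use these operations; $A^0=I$ (identity: $1_R$ on diagonal, $0_R$ off it). $A\cong_\nu B$ means entrywise equality of $\nu$-values. $\det(A)=\sum_{\sigma\in S_n}\prod_i a_{i,\sigma(i)}$; $\operatorname{adj}(A)_{i,j}=\det(A_{j,i})$ (minor deleting row $j$, column $i$); $A^\nabla=\det(A)^{-1}\operatorname{adj}(A)$ when $\det(A)\in T$. A matrix is definite if all diagonal entries are $1_R$ and $\det(A)=1_R$. *)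

theory Defs
  imports Main "HOL-Combinatorics.Permutations"
begin

text \<open>Elements: the zero NegInf (standing for minus infinity), tangible elements Tan a,
  and ghost elements Gh a (a^nu), for a in the ordered abelian group 'g.\<close>

datatype 'g st = NegInf | Tan 'g | Gh 'g

fun sval :: "'g::linordered_ab_group_add st \<Rightarrow> 'g" where
  "sval NegInf = 0" | "sval (Tan a) = a" | "sval (Gh a) = a"

fun nu :: "'g st \<Rightarrow> 'g option" where
  "nu NegInf = None" | "nu (Tan a) = Some a" | "nu (Gh a) = Some a"

fun st_add :: "'g::linordered_ab_group_add st \<Rightarrow> 'g st \<Rightarrow> 'g st" where
  "st_add NegInf y = y"
| "st_add x NegInf = x"
| "st_add x y = (if sval x < sval y then y else if sval y < sval x then x else Gh (sval x))"

fun st_mul :: "'g::linordered_ab_group_add st \<Rightarrow> 'g st \<Rightarrow> 'g st" where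
  "st_mul NegInf y = NegInf"
| "st_mul x NegInf = NegInf"
| "st_mul (Tan a) (Tan b) = Tan (a + b)"
| "st_mul x y = Gh (sval x + sval y)"

instantiation st :: (linordered_ab_group_add) comm_monoid_add
begin
definition zero_st_def: "0 = NegInf"
definition plus_st_def: "x + y = st_add x y"
instance
proof
  fix a b c :: "'a st"
  show "a + b + c = a + (b + c)"
    unfolding plus_st_def by (cases a; cases b; cases c) auto
  show "a + b = b + a"
    unfolding plus_st_def by (cases a; cases b) auto
  show "0 + a = a"
    unfolding plus_st_def zero_st_def by simp
qed
end

instantiation st :: (linordered_ab_group_add) comm_monoid_mult
begin
definition one_st_def: "1 = Tan 0"
definition times_st_def: "x * y = st_mul x y"
instance
proof
  fix a b c :: "'a st"
  show "a * b * c = a * (b * c)"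
    unfolding times_st_def by (cases a; cases b; cases c) (auto simp: add.assoc)
  show "a * b = b * a"
    unfolding times_st_def by (cases a; cases b) (auto simp: add.commute)
  show "1 * a = a"
    unfolding times_st_def one_st_def by (cases a) auto
qed
end

text \<open>Inverse of a tangible element (only used for tangible arguments).\<close>
fun st_inv :: "'g::linordered_ab_group_add st \<Rightarrow> 'g st" where
  "st_inv (Tan a) = Tan (- a)"
| "st_inv x = x"

text \<open>A matrix of size n is a function nat => nat => 'g st; only the entries with
  indices below n are meaningful (indices are 0, ..., n-1).\<close>

type_synonym 'g smat = "nat \<Rightarrow> nat \<Rightarrow> 'g st"

definition smat_id :: "'g::linordered_ab_group_add smat" where
  "smat_id = (\<lambda>i j. if i = j then 1 else 0)"

definition smat_mult :: "nat \<Rightarrow> 'g::linordered_ab_group_add smat \<Rightarrow> 'g smat \<Rightarrow> 'g smat" where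
  "smat_mult n A B = (\<lambda>i j. \<Sum>k<n. A i k * B k j)"

definition smat_add :: "'g::linordered_ab_group_add smat \<Rightarrow> 'g smat \<Rightarrow> 'g smat" where
  "smat_add A B = (\<lambda>i j. A i j + B i j)"

fun smat_pow :: "nat \<Rightarrow> 'g::linordered_ab_group_add smat \<Rightarrow> nat \<Rightarrow> 'g smat" where
  "smat_pow n A 0 = smat_id"
| "smat_pow n A (Suc k) = smat_mult n (smat_pow n A k) A"

definition sdet :: "nat \<Rightarrow> 'g::linordered_ab_group_add smat \<Rightarrow> 'g st" where
  "sdet n A = (\<Sum>\<sigma> | \<sigma> permutes {..<n}. \<Prod>i<n. A i (\<sigma> i))"

definition sminor :: "'g smat \<Rightarrow> nat \<Rightarrow> nat \<Rightarrow> 'g smat" where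
  "sminor A j i = (\<lambda>r c. A (if r < j then r else Suc r) (if c < i then c else Suc c))"

definition sadj :: "nat \<Rightarrow> 'g::linordered_ab_group_add smat \<Rightarrow> 'g smat" where
  "sadj n A = (\<lambda>i j. sdet (n - 1) (sminor A j i))"

text \<open>A^nabla = det(A)^{-1} adj(A) (meaningful when det A is tangible).\<close>
definition snabla :: "nat \<Rightarrow> 'g::linordered_ab_group_add smat \<Rightarrow> 'g smat" where
  "snabla n A = (\<lambda>i j. st_inv (sdet n A) * sadj n A i j)"

definition tangible :: "'g st \<Rightarrow> bool" where
  "tangible x \<longleftrightarrow> (\<exists>a. x = Tan a)"

definition definite :: "nat \<Rightarrow> 'g::linordered_ab_group_add smat \<Rightarrow> bool" where
  "definite n A \<longleftrightarrow> (\<forall>i<n. A i i = 1) \<and> sdet n A = 1"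

text \<open>Kleene star A^* = sum_{i >= 0} A^i; the infinite sum is taken entrywise as the
  eventual value of the partial sums sum_{i<m} A^i.\<close>
definition kleene_star :: "nat \<Rightarrow> 'g::linordered_ab_group_add smat \<Rightarrow> 'g smat" where
  "kleene_star n A = (\<lambda>i j. THE x. \<exists>N. \<forall>m\<ge>N. (\<Sum>k<m. smat_pow n A k i j) = x)"

definition nu_equiv :: "nat \<Rightarrow> 'g smat \<Rightarrow> 'g smat \<Rightarrow> bool" where
  "nu_equiv n A B \<longleftrightarrow> (\<forall>i<n. \<forall>j<n. nu (A i j) = nu (B i j))"

end

theory Submission
  imports Defs "HOL-Library.Option_ord" "HOL-Combinatorics.Cycles"
begin

fun omul :: "'g::linordered_ab_group_add option \<Rightarrow> 'g option \<Rightarrow> 'g option" where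
  "omul (Some a) (Some b) = Some (a + b)"
| "omul _ _ = None"

lemma nu_plus: "nu (x + y) = max (nu x) (nu y)"
  for x y :: "'g::linordered_ab_group_add st"
  unfolding plus_st_def by (cases x; cases y) (auto simp: max_def)

lemma nu_times: "nu (x * y) = omul (nu x) (nu y)"
  for x y :: "'g::linordered_ab_group_add st"
  unfolding times_st_def by (cases x; cases y) auto

lemma nu_one[simp]: "nu (1::'g::linordered_ab_group_add st) = Some 0"
  by (simp add: one_st_def)
lemma nu_zero[simp]: "nu (0::'g::linordered_ab_group_add st) = None"
  by (simp add: zero_st_def)

lemma omul_mono: "a \<le> a' \<Longrightarrow> b \<le> b' \<Longrightarrow> omul a b \<le> omul a' b'"
  for a :: "'g::linordered_ab_group_add option"
  by (cases a; cases a'; cases b; cases b') (auto intro: add_mono)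

lemma omul_le: "b \<le> Some 0 \<Longrightarrow> omul a b \<le> a"
  for a :: "'g::linordered_ab_group_add option"
  by (cases a; cases b) auto

lemma nu_sum_ge: "finite S \<Longrightarrow> s \<in> S \<Longrightarrow> nu (f s) \<le> nu (sum f S)"
  for f :: "'a \<Rightarrow> 'g::linordered_ab_group_add st"
  by (simp add: sum.remove nu_plus)

lemma nu_sum_le: "finite S \<Longrightarrow> (\<And>s. s \<in> S \<Longrightarrow> nu (f s) \<le> c) \<Longrightarrow> nu (sum f S) \<le> c"
  for f :: "'a \<Rightarrow> 'g::linordered_ab_group_add st"
  by (induction S rule: finite_induct) (auto simp: nu_plus)

lemma nu_sum_ex: "finite S \<Longrightarrow> nu (sum f S) = None \<or> (\<exists>s\<in>S. nu (sum f S) = nu (f s))"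
  for f :: "'a \<Rightarrow> 'g::linordered_ab_group_add st"
  by (induction S rule: finite_induct) (auto simp: nu_plus max_def)

lemma ghost3: "nu x \<le> v \<Longrightarrow> nu y = v \<Longrightarrow> nu z = v \<Longrightarrow>
   x + y + z = (case v of None \<Rightarrow> NegInf | Some a \<Rightarrow> Gh a)"
  for x y z :: "'g::linordered_ab_group_add st"
  unfolding plus_st_def by (cases x; cases y; cases z) auto

lemma ghost2: "nu y = v \<Longrightarrow>
   (case v of None \<Rightarrow> NegInf | Some a \<Rightarrow> Gh a) + y = (case v of None \<Rightarrow> NegInf | Some a \<Rightarrow> Gh a)"
  for y :: "'g::linordered_ab_group_add st"
  unfolding plus_st_def by (cases y) auto

lemma nu_case: "nu (case v of None \<Rightarrow> NegInf | Some a \<Rightarrow> Gh a) = v"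
  by (cases v) auto


fun wt :: "'g::linordered_ab_group_add smat \<Rightarrow> nat list \<Rightarrow> 'g st" where
  "wt A (x # y # r) = A x y * wt A (y # r)"
| "wt A _ = 1"

lemma wt_append: "wt A (xs @ v # ys) = wt A (xs @ [v]) * wt A (v # ys)"
proof (induction xs)
  case Nil show ?case by simp
next
  case (Cons x xs) then show ?case by (cases xs) (auto simp: mult.assoc)
qed

lemma wt_snoc: "xs \<noteq> [] \<Longrightarrow> wt A (xs @ [z]) = wt A xs * A (last xs) z"
proof -
  assume "xs \<noteq> []"
  then obtain ys y where xs: "xs = ys @ [y]" by (metis rev_exhaust)
  have "wt A (ys @ y # [z]) = wt A (ys @ [y]) * wt A [y, z]" by (rule wt_append)
  then show ?thesis using xs by simp
qed

lemma pow_mono_Suc: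
  assumes "\<forall>i<n. A i i = 1" "i < n" "j < n"
  shows "nu (smat_pow n A k i j) \<le> nu (smat_pow n A (Suc k) i j)"
proof -
  have "nu (smat_pow n A k i j * A j j) \<le> nu (\<Sum>l<n. smat_pow n A k i l * A l j)"
    by (rule nu_sum_ge[where f="\<lambda>l. smat_pow n A k i l * A l j"]) (use assms in auto)
  then show ?thesis using assms by (simp add: smat_mult_def)
qed

lemma pow_mono:
  assumes "\<forall>i<n. A i i = 1" "i < n" "j < n" "k \<le> k'"
  shows "nu (smat_pow n A k i j) \<le> nu (smat_pow n A k' i j)"
proof -
  have "\<And>k. nu (smat_pow n A k i j) \<le> nu (smat_pow n A (Suc k) i j)"
    using pow_mono_Suc[of n A i j] assms by blast
  then show ?thesis using lift_Suc_mono_le[of "\<lambda>k. nu (smat_pow n A k i j)"] assms(4) by blast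
qed

lemma walk_le_pow:
  "vs \<noteq> [] \<Longrightarrow> set vs \<subseteq> {..<n} \<Longrightarrow>
   nu (wt A vs) \<le> nu (smat_pow n A (length vs - 1) (hd vs) (last vs))"
proof (induction vs rule: rev_induct)
  case Nil then show ?case by simp
next
  case (snoc z xs)
  show ?case
  proof (cases "xs = []")
    case True then show ?thesis by (simp add: smat_id_def)
  next
    case False
    have IH: "nu (wt A xs) \<le> nu (smat_pow n A (length xs - 1) (hd xs) (last xs))"
      using snoc False by auto
    have lx: "last xs < n" using snoc False last_in_set by auto
    have "nu (wt A (xs @ [z])) = omul (nu (wt A xs)) (nu (A (last xs) z))"
      using False by (simp add: wt_snoc nu_times)
    also have "\<dots> \<le> omul (nu (smat_pow n A (length xs - 1) (hd xs) (last xs))) (nu (A (last xs) z))"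
      by (rule omul_mono[OF IH order_refl])
    also have "\<dots> = nu (smat_pow n A (length xs - 1) (hd xs) (last xs) * A (last xs) z)"
      by (simp add: nu_times)
    also have "\<dots> \<le> nu (\<Sum>l<n. smat_pow n A (length xs - 1) (hd xs) l * A l z)"
      by (rule nu_sum_ge[where f="\<lambda>l. smat_pow n A (length xs - 1) (hd xs) l * A l z"]) (use lx in auto)
    also have "\<dots> = nu (smat_pow n A (length (xs @ [z]) - 1) (hd (xs @ [z])) (last (xs @ [z])))"
      using False by (cases xs) (auto simp: smat_mult_def)
    finally show ?thesis .
  qed
qed

lemma pow_walk:
  "i < n \<Longrightarrow> j < n \<Longrightarrow> nu (smat_pow n A k i j) = None \<or>
    (\<exists>vs. vs \<noteq> [] \<and> set vs \<subseteq> {..<n} \<and> hd vs = i \<and> last vs = j \<and> nu (smat_pow n A k i j) \<le> nu (wt A vs))"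
proof (induction k arbitrary: j)
  case 0
  then show ?case by (auto simp: smat_id_def intro!: exI[of _ "[i]"])
next
  case (Suc k)
  have "nu (\<Sum>l<n. smat_pow n A k i l * A l j) = None \<or>
     (\<exists>l\<in>{..<n}. nu (\<Sum>l<n. smat_pow n A k i l * A l j) = nu (smat_pow n A k i l * A l j))"
    by (rule nu_sum_ex) simp
  then show ?case
  proof
    assume "nu (\<Sum>l<n. smat_pow n A k i l * A l j) = None" then show ?case by (simp add: smat_mult_def)
  next
    assume "\<exists>l\<in>{..<n}. nu (\<Sum>l<n. smat_pow n A k i l * A l j) = nu (smat_pow n A k i l * A l j)"
    then obtain l where l: "l < n" and eq: "nu (smat_pow n A (Suc k) i j) = omul (nu (smat_pow n A k i l)) (nu (A l j))"
      by (auto simp: smat_mult_def nu_times)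
    from Suc.IH[OF Suc.prems(1) l] show ?case
    proof
      assume "nu (smat_pow n A k i l) = None" then show ?case using eq by simp
    next
      assume "\<exists>vs. vs \<noteq> [] \<and> set vs \<subseteq> {..<n} \<and> hd vs = i \<and> last vs = l \<and> nu (smat_pow n A k i l) \<le> nu (wt A vs)"
      then obtain vs where vs: "vs \<noteq> []" "set vs \<subseteq> {..<n}" "hd vs = i" "last vs = l"
        "nu (smat_pow n A k i l) \<le> nu (wt A vs)" by blast
      have "nu (smat_pow n A (Suc k) i j) \<le> omul (nu (wt A vs)) (nu (A l j))"
        using eq omul_mono[OF vs(5) order_refl] by simp
      also have "\<dots> = nu (wt A (vs @ [j]))" using vs by (simp add: wt_snoc nu_times)
      finally show ?case using vs Suc.prems by (intro disjI2 exI[of _ "vs @ [j]"]) auto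
    qed
  qed
qed


definition ins :: "nat \<Rightarrow> nat \<Rightarrow> nat" where "ins k c = (if c < k then c else Suc c)"
definition del :: "nat \<Rightarrow> nat \<Rightarrow> nat" where "del k r = (if r < k then r else r - 1)"

lemma sminor_ins: "sminor A j i c d = A (ins j c) (ins i d)"
  by (simp add: sminor_def ins_def)

lemma ins_image: "j < n \<Longrightarrow> ins j ` {..<n-1} = {..<n} - {j}"
proof
  show "ins j ` {..<n-1} \<subseteq> {..<n} - {j}" if "j < n" using that by (auto simp: ins_def)
  show "{..<n} - {j} \<subseteq> ins j ` {..<n-1}" if "j < n"
  proof
    fix r assume "r \<in> {..<n} - {j}"
    then have "r = ins j (del j r)" "del j r \<in> {..<n-1}" using that by (auto simp: ins_def del_def)
    then show "r \<in> ins j ` {..<n-1}" by blast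
  qed
qed

lemma ins_inj: "inj_on (ins j) X" by (auto simp: inj_on_def ins_def split: if_splits)

lemma reindex: "j < n \<Longrightarrow> (\<Prod>r\<in>{..<n}-{j}. g r) = (\<Prod>c<n-1. g (ins j c))"
  for g :: "nat \<Rightarrow> 'a::comm_monoid_mult"
  using prod.reindex[OF ins_inj[of j "{..<n-1}"], of g] ins_image[of j n] by simp

lemma adj_lower:
  fixes A :: "'g::linordered_ab_group_add smat"
  assumes ij: "i < n" "j < n" and s: "\<sigma> permutes {..<n}" "\<sigma> j = i"
  shows "nu (\<Prod>r\<in>{..<n}-{j}. A r (\<sigma> r)) \<le> nu (sadj n A i j)"
proof -
  define \<tau> where "\<tau> = (\<lambda>c. if c < n-1 then del i (\<sigma> (ins j c)) else c)"
  have sne: "\<sigma> (ins j c) \<noteq> i" for c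
  proof
    assume "\<sigma> (ins j c) = i"
    then have "\<sigma> (ins j c) = \<sigma> j" using s(2) by simp
    then have "ins j c = j" using permutes_inj[OF s(1)] by (simp add: inj_eq)
    then show False by (simp add: ins_def split: if_splits)
  qed
  have slt: "c < n - 1 \<Longrightarrow> \<sigma> (ins j c) < n" for c
  proof -
    assume "c < n - 1"
    then have "ins j c \<in> {..<n}" by (auto simp: ins_def)
    then show ?thesis using permutes_in_image[OF s(1), of "ins j c"] by simp
  qed
  have inj: "inj_on \<tau> {..<n-1}"
  proof (rule inj_onI)
    fix c c' assume "c \<in> {..<n-1}" "c' \<in> {..<n-1}" "\<tau> c = \<tau> c'"
    then have "del i (\<sigma> (ins j c)) = del i (\<sigma> (ins j c'))" by (simp add: \<tau>_def)
    then have "\<sigma> (ins j c) = \<sigma> (ins j c')" using sne[of c] sne[of c'] by (auto simp: del_def split: if_splits)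
    then have "ins j c = ins j c'" using permutes_inj[OF s(1)] by (simp add: inj_eq)
    then show "c = c'" by (auto simp: ins_def split: if_splits)
  qed
  have tl: "\<tau> c < n-1" if "c < n-1" for c
    using sne[of c] slt[OF that] ij(1) that by (simp add: \<tau>_def del_def) arith
  have img: "\<tau> ` {..<n-1} \<subseteq> {..<n-1}"
    using tl by auto
  have "bij_betw \<tau> {..<n-1} {..<n-1}"
    using endo_inj_surj[OF _ img inj] inj by (simp add: bij_betw_def)
  then have tp: "\<tau> permutes {..<n-1}"
    by (rule bij_imp_permutes) (simp add: \<tau>_def)
  have ii: "ins i (del i x) = x" if "x \<noteq> i" for x using that by (auto simp: ins_def del_def)
  have "(\<Prod>r\<in>{..<n}-{j}. A r (\<sigma> r)) = (\<Prod>c<n-1. A (ins j c) (\<sigma> (ins j c)))"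
    by (rule reindex[OF ij(2)])
  also have "\<dots> = (\<Prod>c<n-1. sminor A j i c (\<tau> c))"
    by (rule prod.cong) (auto simp: sminor_ins \<tau>_def ii[OF sne])
  finally have eq: "(\<Prod>r\<in>{..<n}-{j}. A r (\<sigma> r)) = (\<Prod>c<n-1. sminor A j i c (\<tau> c))" .
  show ?thesis unfolding eq sadj_def sdet_def
    by (rule nu_sum_ge[where f="\<lambda>\<tau>. \<Prod>c<n-1. sminor A j i c (\<tau> c)"]) (use tp in \<open>auto simp: finite_permutations\<close>)
qed

lemma adj_upper:
  fixes A :: "'g::linordered_ab_group_add smat"
  assumes ij: "i < n" "j < n"
    and H: "\<And>\<sigma>. \<sigma> permutes {..<n} \<Longrightarrow> \<sigma> j = i \<Longrightarrow> nu (\<Prod>r\<in>{..<n}-{j}. A r (\<sigma> r)) \<le> c"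
  shows "nu (sadj n A i j) \<le> c"
  unfolding sadj_def sdet_def
proof (rule nu_sum_le)
  show "finite {\<tau>. \<tau> permutes {..<n-1}}" by (simp add: finite_permutations)
  fix \<tau> assume "\<tau> \<in> {\<tau>. \<tau> permutes {..<n-1}}"
  then have tp: "\<tau> permutes {..<n-1}" by simp
  define \<sigma> where "\<sigma> = (\<lambda>r. if r < n then (if r = j then i else ins i (\<tau> (del j r))) else r)"
  have tlt: "c < n - 1 \<Longrightarrow> \<tau> c < n - 1" for c using permutes_in_image[OF tp] by auto
  have dlt: "r < n \<Longrightarrow> r \<noteq> j \<Longrightarrow> del j r < n - 1" for r using ij by (auto simp: del_def)
  have inj: "inj_on \<sigma> {..<n}"
  proof (rule inj_onI)
    fix r r' assume r: "r \<in> {..<n}" "r' \<in> {..<n}" "\<sigma> r = \<sigma> r'"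
    have insne: "ins i x \<noteq> i" for x by (simp add: ins_def)
    show "r = r'"
    proof (cases "r = j \<or> r' = j")
      case True then show ?thesis using r insne by (auto simp: \<sigma>_def split: if_splits) (metis insne)+
    next
      case False
      then have "ins i (\<tau> (del j r)) = ins i (\<tau> (del j r'))" using r by (simp add: \<sigma>_def)
      then have "\<tau> (del j r) = \<tau> (del j r')" using ins_inj[of i UNIV] by (simp add: inj_on_def)
      then have "del j r = del j r'" using permutes_inj[OF tp] by (simp add: inj_eq)
      then show ?thesis using False by (auto simp: del_def split: if_splits)
    qed
  qed
  have img: "\<sigma> ` {..<n} \<subseteq> {..<n}"
  proof
    fix y assume "y \<in> \<sigma> ` {..<n}"
    then obtain r where r: "r < n" "y = \<sigma> r" by auto
    show "y \<in> {..<n}"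
    proof (cases "r = j")
      case True then show ?thesis using r ij by (simp add: \<sigma>_def)
    next
      case False
      then have "\<tau> (del j r) < n - 1" using tlt dlt r by simp
      then show ?thesis using r False by (auto simp: \<sigma>_def ins_def)
    qed
  qed
  have "bij_betw \<sigma> {..<n} {..<n}"
    using endo_inj_surj[OF _ img inj] inj by (simp add: bij_betw_def)
  then have sp: "\<sigma> permutes {..<n}"
    by (rule bij_imp_permutes) (simp add: \<sigma>_def)
  have sj: "\<sigma> j = i" using ij by (simp add: \<sigma>_def)
  have dj: "del j (ins j c) = c" for c by (simp add: ins_def del_def)
  have "(\<Prod>r\<in>{..<n}-{j}. A r (\<sigma> r)) = (\<Prod>c<n-1. A (ins j c) (\<sigma> (ins j c)))"
    by (rule reindex[OF ij(2)])
  also have "\<dots> = (\<Prod>c<n-1. sminor A j i c (\<tau> c))"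
  proof (rule prod.cong)
    fix c assume "c \<in> {..<n-1}"
    then have "ins j c < n" "ins j c \<noteq> j" by (auto simp: ins_def)
    then show "A (ins j c) (\<sigma> (ins j c)) = sminor A j i c (\<tau> c)"
      by (simp add: \<sigma>_def sminor_ins dj)
  qed simp
  finally show "nu (\<Prod>c<n-1. sminor A j i c (\<tau> c)) \<le> c"
    using H[OF sp sj] by simp
qed


lemma cyc_nth:
  assumes "distinct cs" "t < length cs"
  shows "cycle_of_list cs (cs ! t) = cs ! (Suc t mod length cs)"
proof -
  have "map (cycle_of_list cs ^^ 1) cs = rotate 1 cs" by (rule cyclic_rotation[OF assms(1)])
  then have "map (cycle_of_list cs) cs = rotate1 cs" by simp
  then have "map (cycle_of_list cs) cs ! t = rotate1 cs ! t" by simp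
  then show ?thesis using assms(2) by (simp add: nth_rotate1)
qed

lemma cyc_last:
  assumes "distinct cs" "cs \<noteq> []"
  shows "cycle_of_list cs (last cs) = hd cs"
proof -
  have "last cs = cs ! (length cs - 1)" using assms by (simp add: last_conv_nth)
  moreover have "cycle_of_list cs (cs ! (length cs - 1)) = cs ! (Suc (length cs - 1) mod length cs)"
    using assms by (intro cyc_nth) auto
  ultimately show ?thesis using assms by (simp add: hd_conv_nth)
qed

lemma cyc_prod:
  "distinct cs \<Longrightarrow> cs \<noteq> [] \<Longrightarrow> (\<Prod>r\<in>set cs - {last cs}. A r (cycle_of_list cs r)) = wt A cs"
proof (induction cs rule: cycle_of_list.induct)
  case (1 i j cs)
  let ?c = "cycle_of_list (j # cs)"
  have iin: "i \<notin> set (j # cs)" using 1 by auto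
  have d: "distinct (j # cs)" using 1 by auto
  have ci: "cycle_of_list (i # j # cs) i = j"
    using iin by (simp add: id_outside_supp)
  have eqr: "cycle_of_list (i # j # cs) r = ?c r" if r: "r \<in> set (j # cs) - {last (j # cs)}" for r
  proof -
    have "?c r \<in> set (j # cs)" using r permutes_in_image[OF cycle_permutes[of "j # cs"]] by auto
    moreover have "?c r \<noteq> j"
    proof
      assume "?c r = j"
      then have "?c r = ?c (last (j # cs))" using cyc_last[OF d] by simp
      then show False using r permutation_bijective[OF permutation_of_cycle[of "j # cs"]]
        by (metis DiffD2 bij_is_inj inj_eq singletonI)
    qed
    moreover have "?c r \<noteq> i" using calculation(1) iin by blast
    ultimately show ?thesis by (simp add: transpose_def)
  qed
  have set_eq: "set (i # j # cs) - {last (i # j # cs)} = insert i (set (j # cs) - {last (j # cs)})"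
    using iin by auto
  have "(\<Prod>r\<in>set (i # j # cs) - {last (i # j # cs)}. A r (cycle_of_list (i # j # cs) r))
      = A i j * (\<Prod>r\<in>set (j # cs) - {last (j # cs)}. A r (cycle_of_list (i # j # cs) r))"
    unfolding set_eq using iin ci by (subst prod.insert) auto
  also have "\<dots> = A i j * (\<Prod>r\<in>set (j # cs) - {last (j # cs)}. A r (?c r))"
    using eqr by (metis (no_types, lifting) prod.cong)
  also have "\<dots> = A i j * wt A (j # cs)" using 1 d by simp
  finally show ?case by simp
qed auto

lemma prod_split_diag:
  fixes A :: "'g::linordered_ab_group_add smat"
  assumes D: "\<forall>r<n. A r r = 1" and S: "S \<subseteq> {..<n}" and fx: "\<And>r. r \<notin> S \<Longrightarrow> f r = r"
    and T: "T \<subseteq> S"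
  shows "(\<Prod>r\<in>{..<n} - T. A r (f r)) = (\<Prod>r\<in>S - T. A r (f r))"
proof -
  have eq: "{..<n} - T = (S - T) \<union> ({..<n} - S)" using S T by auto
  have one: "(\<Prod>r\<in>{..<n} - S. A r (f r)) = 1"
    using D fx by (intro prod.neutral) auto
  have fS: "finite S" using S finite_subset by blast
  have "(\<Prod>r\<in>{..<n} - T. A r (f r)) = (\<Prod>r\<in>(S - T) \<union> ({..<n} - S). A r (f r))"
    using eq by simp
  also have "\<dots> = (\<Prod>r\<in>S - T. A r (f r)) * (\<Prod>r\<in>{..<n} - S. A r (f r))"
    by (rule prod.union_disjoint) (use fS in auto)
  finally show ?thesis using one by simp
qed

lemma cycle_term:
  fixes A :: "'g::linordered_ab_group_add smat"
  assumes D: "\<forall>r<n. A r r = 1" and d: "distinct vs" "vs \<noteq> []" "set vs \<subseteq> {..<n}"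
  shows "(\<Prod>r\<in>{..<n} - {last vs}. A r (cycle_of_list vs r)) = wt A vs"
    and "(\<Prod>r<n. A r (cycle_of_list vs r)) = wt A (vs @ [hd vs])"
proof -
  have l: "last vs \<in> set vs" using d by simp
  show 1: "(\<Prod>r\<in>{..<n} - {last vs}. A r (cycle_of_list vs r)) = wt A vs"
    using prod_split_diag[of n A "set vs" "cycle_of_list vs" "{last vs}", OF D d(3)] l
      id_outside_supp[of _ vs] cyc_prod[OF d(1,2)] by auto
  have ln: "last vs < n" using l d(3) by blast
  have "(\<Prod>r<n. A r (cycle_of_list vs r)) = A (last vs) (cycle_of_list vs (last vs)) *
        (\<Prod>r\<in>{..<n} - {last vs}. A r (cycle_of_list vs r))"
    using ln by (subst prod.remove[of _ "last vs"]) auto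
  also have "\<dots> = wt A vs * A (last vs) (hd vs)"
    using 1 cyc_last[OF d(1,2)] by (simp add: mult.commute)
  finally show "(\<Prod>r<n. A r (cycle_of_list vs r)) = wt A (vs @ [hd vs])"
    using wt_snoc[OF d(2), of A "hd vs"] by simp
qed


context
  fixes A :: "'g::linordered_ab_group_add smat" and n :: nat
  assumes D: "\<forall>r<n. A r r = 1"
    and P: "\<And>\<sigma>. \<sigma> permutes {..<n} \<Longrightarrow> nu (\<Prod>r<n. A r (\<sigma> r)) \<le> Some 0"
begin

lemma path_le_adj:
  assumes d: "distinct vs" "vs \<noteq> []" "set vs \<subseteq> {..<n}"
  shows "nu (wt A vs) \<le> nu (sadj n A (hd vs) (last vs))"
proof -
  have cp: "cycle_of_list vs permutes {..<n}"
    using permutes_subset[OF cycle_permutes d(3)] .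
  have "hd vs \<in> set vs" "last vs \<in> set vs" using d(2) by auto
  then have h: "hd vs < n" "last vs < n" using d(3) by auto
  show ?thesis
    using adj_lower[OF h cp cyc_last[OF d(1,2)], of A] cycle_term(1)[of n A vs, OF D d] by simp
qed

lemma cycle_le0:
  assumes d: "distinct vs" "vs \<noteq> []" "set vs \<subseteq> {..<n}"
  shows "nu (wt A (vs @ [hd vs])) \<le> Some 0"
proof -
  have cp: "cycle_of_list vs permutes {..<n}"
    using permutes_subset[OF cycle_permutes d(3)] .
  show ?thesis using P[OF cp] cycle_term(2)[of n A vs, OF D d] by simp
qed

lemma walk_bound:
  "vs \<noteq> [] \<Longrightarrow> set vs \<subseteq> {..<n} \<Longrightarrow>
   nu (wt A vs) \<le> nu (sadj n A (hd vs) (last vs)) \<and> (hd vs = last vs \<longrightarrow> nu (wt A vs) \<le> Some 0)"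
proof (induction "length vs" arbitrary: vs rule: less_induct)
  case less
  note ne = less.prems(1) and sub = less.prems(2)
  show ?case
  proof (cases "distinct vs")
    case True
    have 2: "nu (wt A vs) \<le> Some 0" if "hd vs = last vs"
    proof -
      obtain x xs where vs: "vs = x # xs" using ne by (cases vs) auto
      have "xs = []"
      proof (rule ccontr)
        assume "xs \<noteq> []"
        then have "last vs \<in> set xs" using vs by simp
        then show False using that True vs by simp
      qed
      then show ?thesis using vs by simp
    qed
    show ?thesis using path_le_adj[OF True ne sub] 2 by blast
  next
    case nd: False
    show ?thesis
    proof (cases "distinct (butlast vs) \<and> distinct (tl vs)")
      case True
      obtain x xs where vs: "vs = x # xs" using ne by (cases vs) auto
      have xin: "x \<in> set xs" using nd True vs by auto
      then have xsne: "xs \<noteq> []" by auto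
      have "x \<notin> set (butlast xs)" using True vs xsne by auto
      then have xl: "x = last xs" using xin xsne by (metis append_butlast_last_id rotate1.simps(2) set_rotate1 set_ConsD)
      define cs where "cs = x # butlast xs"
      have vscs: "vs = cs @ [hd cs]" using vs xl xsne by (simp add: cs_def)
      have dcs: "distinct cs" using True vs xsne by (simp add: cs_def)
      have scs: "set cs \<subseteq> {..<n}" using sub vs by (auto simp: cs_def dest: in_set_butlastD)
      have le0: "nu (wt A vs) \<le> Some 0" using cycle_le0[OF dcs _ scs] vscs by (simp add: cs_def)
      have x: "x < n" using sub vs by auto
      have "Some 0 \<le> nu (sadj n A x x)"
        using path_le_adj[of "[x]"] x by simp
      moreover have "hd vs = x" "last vs = x" using vs xl xsne by auto
      ultimately show ?thesis using le0 by auto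
    next
      case False
      obtain xs y ys zs where dec: "vs = xs @ [y] @ ys @ [y] @ zs" and nz: "xs \<noteq> [] \<or> zs \<noteq> []"
      proof (cases "distinct (butlast vs)")
        case False
        then obtain xs y ys zs where "butlast vs = xs @ [y] @ ys @ [y] @ zs"
          using not_distinct_decomp by blast
        then have "vs = xs @ [y] @ ys @ [y] @ (zs @ [last vs])"
          using ne by (metis append.assoc append_butlast_last_id)
        then show ?thesis using that by blast
      next
        case True
        then have "\<not> distinct (tl vs)" using \<open>\<not> (distinct (butlast vs) \<and> distinct (tl vs))\<close> by blast
        then obtain xs y ys zs where "tl vs = xs @ [y] @ ys @ [y] @ zs"
          using not_distinct_decomp by blast
        then have "vs = (hd vs # xs) @ [y] @ ys @ [y] @ zs"
          using ne by (metis append_Cons list.exhaust_sel)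
        then show ?thesis using that by blast
      qed
      define W where "W = xs @ [y] @ zs"
      define C where "C = y # ys @ [y]"
      have lW: "length W < length vs" using dec by (simp add: W_def)
      have lC: "length C < length vs" using dec nz by (auto simp: C_def)
      have sW: "set W \<subseteq> {..<n}" "W \<noteq> []" using sub dec by (auto simp: W_def)
      have sC: "set C \<subseteq> {..<n}" "C \<noteq> []" using sub dec by (auto simp: C_def)
      have hW: "hd W = hd vs" "last W = last vs" using dec by (auto simp: W_def hd_append last_append)
      have IHW: "nu (wt A W) \<le> nu (sadj n A (hd W) (last W)) \<and> (hd W = last W \<longrightarrow> nu (wt A W) \<le> Some 0)"
        using less.hyps[OF lW sW(2,1)] .
      have IHC: "nu (wt A C) \<le> Some 0"
        using less.hyps[OF lC sC(2,1)] by (simp add: C_def)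
      have "wt A vs = wt A (xs @ [y]) * wt A ((y # ys) @ y # zs)"
        using dec wt_append[of A xs y "ys @ y # zs"] by simp
      also have "\<dots> = wt A (xs @ [y]) * (wt A C * wt A (y # zs))"
        using wt_append[of A "y # ys" y zs] by (simp add: C_def)
      also have "\<dots> = wt A W * wt A C"
        using wt_append[of A xs y zs] by (simp add: W_def mult_ac)
      finally have "nu (wt A vs) = omul (nu (wt A W)) (nu (wt A C))" by (simp add: nu_times)
      also have "\<dots> \<le> nu (wt A W)" by (rule omul_le[OF IHC])
      finally have le: "nu (wt A vs) \<le> nu (wt A W)" .
      show ?thesis using IHW hW le by auto
    qed
  qed
qed

lemma pow_le_adj:
  assumes "i < n" "j < n"
  shows "nu (smat_pow n A k i j) \<le> nu (sadj n A i j)"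
  using pow_walk[OF assms, of A k]
proof
  assume "nu (smat_pow n A k i j) = None" then show ?thesis by simp
next
  assume "\<exists>vs. vs \<noteq> [] \<and> set vs \<subseteq> {..<n} \<and> hd vs = i \<and> last vs = j \<and> nu (smat_pow n A k i j) \<le> nu (wt A vs)"
  then obtain vs where vs: "vs \<noteq> []" "set vs \<subseteq> {..<n}" "hd vs = i" "last vs = j"
    "nu (smat_pow n A k i j) \<le> nu (wt A vs)" by blast
  show ?thesis using walk_bound[OF vs(1,2)] vs(3-5) by auto
qed

end


lemma path_cycle_bound:
  fixes A :: "'g::linordered_ab_group_add smat"
  assumes D: "\<forall>r<n. A r r = 1"
    and P: "\<And>\<sigma>. \<sigma> permutes {..<n} \<Longrightarrow> nu (\<Prod>r<n. A r (\<sigma> r)) \<le> Some 0"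
    and ij: "i < n" "j < n" and s: "\<sigma> permutes {..<n}" "\<sigma> j = i"
  shows "nu (\<Prod>r\<in>{..<n}-{j}. A r (\<sigma> r)) \<le> nu (smat_pow n A (n - 1) i j)"
proof -
  have perm: "permutation \<sigma>" using s(1) permutation_permutes by blast
  define L where "L = least_power \<sigma> i"
  have L: "L > 0" "(\<sigma> ^^ L) i = i" using least_power_of_permutation[OF perm] by (auto simp: L_def)
  define vs where "vs = support \<sigma> i"
  have dvs: "distinct vs" using cycle_of_permutation[OF perm] by (simp add: vs_def)
  have lvs: "length vs = L" by (simp add: vs_def L_def)
  have nvs: "t < L \<Longrightarrow> vs ! t = (\<sigma> ^^ t) i" for t by (simp add: vs_def L_def)
  have vsne: "vs \<noteq> []" using lvs L by auto
  have inS: "(\<sigma> ^^ t) i \<in> {..<n}" for t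
    using permutes_in_image[OF permutes_funpow[OF s(1), of t]] ij by simp
  have svs: "set vs \<subseteq> {..<n}" using inS by (auto simp: vs_def)
  have injs: "inj \<sigma>" using permutes_inj[OF s(1)] .
  have hvs: "hd vs = i" using nvs[of 0] L vsne by (simp add: hd_conv_nth)
  have lastvs: "last vs = j"
  proof -
    have "last vs = (\<sigma> ^^ (L - 1)) i" using nvs[of "L - 1"] L vsne lvs by (simp add: last_conv_nth)
    moreover have "\<sigma> ((\<sigma> ^^ (L - 1)) i) = \<sigma> j"
    proof -
      have "\<sigma> ((\<sigma> ^^ (L - 1)) i) = (\<sigma> ^^ Suc (L - 1)) i" by simp
      also have "\<dots> = i" using L by simp
      finally show ?thesis using s(2) by simp
    qed
    ultimately show ?thesis using injs by (simp add: inj_eq)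
  qed
  define c where "c = cycle_of_list vs"
  have agree: "\<sigma> r = c r" if rin: "r \<in> set vs" for r
  proof -
    obtain t where t: "t < L" "r = vs ! t" using rin lvs in_set_conv_nth[of r vs] by auto
    have cr: "c r = vs ! (Suc t mod L)" using cyc_nth[OF dvs, of t] t lvs by (simp add: c_def)
    have sr: "\<sigma> r = (\<sigma> ^^ Suc t) i" using t nvs by simp
    show ?thesis
    proof (cases "Suc t < L")
      case True then show ?thesis using cr sr nvs by simp
    next
      case False
      then have "Suc t = L" using t by simp
      then show ?thesis using cr sr nvs[of 0] L by simp
    qed
  qed
  have cp0: "c permutes set vs" by (simp add: c_def cycle_permutes)
  have cp: "c permutes {..<n}" using permutes_subset[OF cp0 svs] .
  define \<sigma>' where "\<sigma>' = \<sigma> \<circ> inv c"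
  have sp': "\<sigma>' permutes {..<n}" unfolding \<sigma>'_def by (rule permutes_compose[OF permutes_inv[OF cp] s(1)])
  have s'in: "\<sigma>' r = r" if "r \<in> set vs" for r
  proof -
    have "inv c r \<in> set vs" using permutes_in_image[OF permutes_inv[OF cp0]] that by simp
    then have "\<sigma> (inv c r) = c (inv c r)" using agree by simp
    then show ?thesis using permutes_inverses(1)[OF cp0] by (simp add: \<sigma>'_def)
  qed
  have s'out: "\<sigma>' r = \<sigma> r" if "r \<notin> set vs" for r
    using permutes_not_in[OF permutes_inv[OF cp0] that] by (simp add: \<sigma>'_def)
  define R where "R = (\<Prod>r\<in>{..<n} - set vs. A r (\<sigma> r))"
  have full: "(\<Prod>r<n. A r (\<sigma>' r)) = R"
  proof -
    have "(\<Prod>r<n. A r (\<sigma>' r)) = (\<Prod>r\<in>{..<n} - set vs. A r (\<sigma>' r)) * (\<Prod>r\<in>set vs. A r (\<sigma>' r))"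
      by (rule prod.subset_diff[OF svs]) simp
    also have "(\<Prod>r\<in>set vs. A r (\<sigma>' r)) = 1"
    proof (rule prod.neutral, intro ballI)
      fix r assume r: "r \<in> set vs"
      then have "r < n" using svs by auto
      then show "A r (\<sigma>' r) = 1" using s'in[OF r] D by simp
    qed
    also have "(\<Prod>r\<in>{..<n} - set vs. A r (\<sigma>' r)) = R"
      unfolding R_def by (rule prod.cong) (simp_all add: s'out)
    finally show ?thesis by simp
  qed
  have Rle: "nu R \<le> Some 0" using P[OF sp'] full by simp
  have jin: "j \<in> set vs" using lastvs vsne by (metis last_in_set)
  have tm: "(\<Prod>r\<in>{..<n}-{j}. A r (\<sigma> r)) = wt A vs * R"
  proof -
    have sub: "set vs - {j} \<subseteq> {..<n} - {j}" using svs by auto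
    have "(\<Prod>r\<in>{..<n}-{j}. A r (\<sigma> r)) = (\<Prod>r\<in>({..<n}-{j}) - (set vs - {j}). A r (\<sigma> r)) * (\<Prod>r\<in>set vs - {j}. A r (\<sigma> r))"
      by (rule prod.subset_diff[OF sub]) simp
    also have "({..<n}-{j}) - (set vs - {j}) = {..<n} - set vs" using jin by auto
    also have "(\<Prod>r\<in>set vs - {j}. A r (\<sigma> r)) = (\<Prod>r\<in>set vs - {last vs}. A r (c r))"
      by (rule prod.cong) (simp_all add: agree lastvs)
    also have "\<dots> = wt A vs" unfolding c_def by (rule cyc_prod[OF dvs vsne])
    finally show ?thesis by (simp add: R_def mult.commute)
  qed
  have "nu (\<Prod>r\<in>{..<n}-{j}. A r (\<sigma> r)) = omul (nu (wt A vs)) (nu R)" by (simp add: tm nu_times)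
  also have "\<dots> \<le> nu (wt A vs)" by (rule omul_le[OF Rle])
  also have "\<dots> \<le> nu (smat_pow n A (L - 1) i j)" using walk_le_pow[OF vsne svs, of A] hvs lastvs lvs by simp
  also have "\<dots> \<le> nu (smat_pow n A (n - 1) i j)"
  proof (rule pow_mono[of n A i j "L - 1" "n - 1", OF D ij])
    have "card (set vs) \<le> card {..<n}" using svs by (intro card_mono) auto
    then show "L - 1 \<le> n - 1" using distinct_card[OF dvs] lvs by simp
  qed
  finally show ?thesis .
qed


theorem proposition3p7:
  fixes A :: "'g::linordered_ab_group_add smat" and n :: nat
  assumes "definite n A"
  shows "nu_equiv n (snabla n A) (kleene_star n A)
       \<and> nu_equiv n (kleene_star n A) (smat_pow n A (n - 1))"
proof -
  have D: "\<forall>r<n. A r r = 1" and det: "sdet n A = 1" using assms by (auto simp: definite_def)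
  have P: "nu (\<Prod>r<n. A r (\<sigma> r)) \<le> Some 0" if "\<sigma> permutes {..<n}" for \<sigma>
  proof -
    have "nu (\<Prod>r<n. A r (\<sigma> r)) \<le> nu (sdet n A)" unfolding sdet_def
      by (rule nu_sum_ge[where f="\<lambda>\<sigma>. \<Prod>r<n. A r (\<sigma> r)"]) (use that in \<open>auto simp: finite_permutations\<close>)
    then show ?thesis using det by simp
  qed
  have main: "nu (snabla n A i j) = nu (kleene_star n A i j) \<and> nu (kleene_star n A i j) = nu (smat_pow n A (n - 1) i j)"
    if ij: "i < n" "j < n" for i j
  proof -
    define v where "v = nu (smat_pow n A (n - 1) i j)"
    have adj_le: "nu (sadj n A i j) \<le> v" unfolding v_def
      by (rule adj_upper[OF ij]) (rule path_cycle_bound[where A=A and n=n and i=i and j=j, OF D P ij], auto)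
    have adj_ge: "v \<le> nu (sadj n A i j)" unfolding v_def
      by (rule pow_le_adj[where A=A and n=n and i=i and j=j, OF D P ij])
    have pk: "nu (smat_pow n A k i j) = v" if "n - 1 \<le> k" for k
    proof (rule antisym)
      show "nu (smat_pow n A k i j) \<le> v" using pow_le_adj[where A=A and n=n and i=i and j=j and k=k, OF D P ij] adj_le by simp
      show "v \<le> nu (smat_pow n A k i j)" unfolding v_def by (rule pow_mono[where A=A and n=n and i=i and j=j, OF D ij that])
    qed
    have pl: "nu (smat_pow n A k i j) \<le> v" if "k \<le> n - 1" for k
      unfolding v_def by (rule pow_mono[where A=A and n=n and i=i and j=j, OF D ij that])
    have inv1: "st_inv (sdet n A) = 1" using det by (simp add: one_st_def)
    have nabla: "snabla n A i j = sadj n A i j"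
      by (simp add: snabla_def inv1)
    define c where "c = (case v of None \<Rightarrow> NegInf | Some a \<Rightarrow> Gh a)"
    define S where "S = (\<lambda>m. \<Sum>k<m. smat_pow n A k i j)"
    have Sc: "S m = c" if "n + 1 \<le> m" for m
      using that
    proof (induction m rule: dec_induct)
      case base
      have n1: "n + 1 = Suc (Suc (n - 1))" using ij by simp
      have "S (n + 1) = S (n - 1) + smat_pow n A (n - 1) i j + smat_pow n A (Suc (n - 1)) i j"
        unfolding S_def n1 by (simp add: add.assoc)
      also have "\<dots> = c" unfolding c_def
      proof (rule ghost3)
        show "nu (S (n - 1)) \<le> v" unfolding S_def by (rule nu_sum_le) (auto intro: pl)
        show "nu (smat_pow n A (n - 1) i j) = v" by (simp add: v_def)
        show "nu (smat_pow n A (Suc (n - 1)) i j) = v" by (rule pk) simp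
      qed
      finally show ?case .
    next
      case (step m)
      have "S (Suc m) = S m + smat_pow n A m i j" by (simp add: S_def)
      also have "\<dots> = c" using step ghost2[of "smat_pow n A m i j" v] pk[of m] by (simp add: c_def)
      finally show ?case .
    qed
    have ks: "kleene_star n A i j = c"
      unfolding kleene_star_def
    proof (rule the_equality)
      show "\<exists>N. \<forall>m\<ge>N. (\<Sum>k<m. smat_pow n A k i j) = c" using Sc by (auto simp: S_def)
      fix x assume "\<exists>N. \<forall>m\<ge>N. (\<Sum>k<m. smat_pow n A k i j) = x"
      then obtain N where N: "\<forall>m\<ge>N. S m = x" by (auto simp: S_def)
      have "S (max N (n + 1)) = x" using N by simp
      moreover have "S (max N (n + 1)) = c" using Sc by simp
      ultimately show "x = c" by simp
    qed
    have nc: "nu c = v" by (simp add: c_def nu_case)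
    show ?thesis using nabla ks nc adj_le adj_ge by (simp add: v_def)
  qed
  show ?thesis using main by (simp add: nu_equiv_def)
qed

end
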